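(* Let $k,m\ge 1$, let $q\in\mathbb{R}^k$ (the source position) and let $p_1,\dots,p_m\in\mathbb{R}^k$ (the sensor positions) with $p_i\neq q$ for all $i$; write $\mathbf{p}=[p_1^\top,\dots,p_m^\top]^\top$, $r_i=\|p_i-q\|$ and $\hat r_i=(p_i-q)/\|p_i-q\|$. For each $i$ let $g_i:(0,\infty)\to\mathbb{R}$ be continuously differentiable and let $h_i(p_i,q)=g_i(\|p_i-q\|)$. Assume: (i) for each $i$, $|g_i'(r)|$ is monotonically decreasing in $r$; (ii) $\sum_{i=1}^m \hat r_i\hat r_i^\top\succ 0$. Let $H(\mathbf{p},q)=(h_1(p_1,q),\dots,h_m(p_m,q))^\top$, let $\nabla_q H(\mathbf{p},q)$ be the $k\times m$ matrix whose $i$-th column is $\nabla_q h_i(p_i,q)$, and suppose the $k\times k$ matrix $\nabla_q H(\mathbf{p},q)\nabla_q H(\mathbf{p},q)^\top$ is invertible, so that $$L(\mathbf{p},q)=\operatorname{Tr}\Big[\big(\nabla_q H(\mathbf{p},q)\,\nabla_q H(\mathbf{p},q)^\top\big)^{-1}\Big]$$ is defined. Then $$\frac{1}{m\,L(\mathbf{p},q)}\le \max_{1\le i\le m}|g_i'(r_i)|^2 .$$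
   Context: Here $\|\cdot\|$ is the Euclidean norm, $\succ 0$ means positive definite, and $\nabla_q h_i$ denotes the gradient of $h_i$ with respect to $q$. The matrix $\nabla_q H\nabla_q H^\top$ plays the role of the (unnormalized) Fisher information matrix of the measurements $y_i=h_i(p_i,q)+\nu_i$ with i.i.d. Gaussian noise. *)

theory Defs
  imports "HOL-Analysis.Analysis"
begin

definition grad :: "(real^'k \<Rightarrow> real) \<Rightarrow> real^'k \<Rightarrow> real^'k" where
  "grad f x = (THE G. (f has_derivative (\<lambda>v. G \<bullet> v)) (at x))"

definition outer :: "real^'k \<Rightarrow> real^'k \<Rightarrow> real^'k^'k" where
  "outer u v = (\<chi> i j. u $ i * v $ j)"

definition pos_def :: "real^'k^'k \<Rightarrow> bool" where
  "pos_def A \<longleftrightarrow> transpose A = A \<and> (\<forall>x. x \<noteq> 0 \<longrightarrow> x \<bullet> (A *v x) > 0)"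

definition gradH :: "('m::finite \<Rightarrow> real \<Rightarrow> real) \<Rightarrow> ('m \<Rightarrow> real^'k) \<Rightarrow> real^'k \<Rightarrow> real^'m^'k" where
  "gradH g p q = (\<chi> j i. grad (\<lambda>x. g i (norm (p i - x))) q $ j)"

definition Lcost :: "('m::finite \<Rightarrow> real \<Rightarrow> real) \<Rightarrow> ('m \<Rightarrow> real^'k) \<Rightarrow> real^'k \<Rightarrow> real" where
  "Lcost g p q = trace (matrix_inv (gradH g p q ** transpose (gradH g p q)))"

end

theory Submission
  imports Defs
begin
lemma grad_h:
  fixes p q :: "real^'k"
  assumes "p \<noteq> q" "(g has_real_derivative d) (at (norm (p - q)))"
  shows "grad (\<lambda>x. g (norm (p - x))) q = (d / norm (p-q)) *\<^sub>R (q - p)"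
proof -
  let ?G = "(d / norm (p-q)) *\<^sub>R (q - p)"
  have n: "((\<lambda>x. norm x) has_derivative (\<lambda>v. sgn (p - q) \<bullet> v)) (at (p - q))"
    using has_derivative_norm[of "p - q"] assms(1) by (simp add: inner_commute)
  have m: "((\<lambda>x. p - x) has_derivative (\<lambda>v. - v)) (at q)"
    by (auto intro!: derivative_eq_intros)
  have c: "((\<lambda>x. norm (p - x)) has_derivative (\<lambda>v. sgn (p - q) \<bullet> (- v))) (at q)"
    using has_derivative_compose[OF m n] by simp
  have gd: "(g has_derivative (\<lambda>x. d * x)) (at (norm (p - q)))"
    using assms(2) by (simp add: has_field_derivative_def)
  have "((\<lambda>x. g (norm (p - x))) has_derivative (\<lambda>v. d * (sgn (p - q) \<bullet> (- v)))) (at q)"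
    using has_derivative_compose[OF c gd] by simp
  moreover have "(\<lambda>v. d * (sgn (p - q) \<bullet> (- v))) = (\<lambda>v. ?G \<bullet> v)"
    by (auto simp: sgn_div_norm inner_commute algebra_simps inner_diff_left inner_diff_right divide_inverse)
  ultimately have D: "((\<lambda>x. g (norm (p - x))) has_derivative (\<lambda>v. ?G \<bullet> v)) (at q)" by simp
  show ?thesis unfolding grad_def
  proof (rule the_equality)
    show "((\<lambda>x. g (norm (p - x))) has_derivative (\<lambda>v. ?G \<bullet> v)) (at q)" by (rule D)
  next
    fix G assume "((\<lambda>x. g (norm (p - x))) has_derivative (\<lambda>v. G \<bullet> v)) (at q)"
    from has_derivative_unique[OF this D] have "(\<lambda>v. G \<bullet> v) = (\<lambda>v. ?G \<bullet> v)" .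
    hence "G \<bullet> (G - ?G) = ?G \<bullet> (G - ?G)" by metis
    hence "(G - ?G) \<bullet> (G - ?G) = 0" by (simp add: inner_diff_left)
    thus "G = ?G" by simp
  qed
qed
lemma inv_right:
  fixes M :: "real^'n^'n"
  assumes "invertible M" shows "M ** matrix_inv M = mat 1"
  using assms unfolding invertible_def matrix_inv_def by (metis (mono_tags, lifting) someI_ex)

lemma diag_facts:
  fixes G :: "real^'m^'k"
  assumes "invertible (G ** transpose G)"
  defines "Mi \<equiv> matrix_inv (G ** transpose G)"
  shows "Mi$i$i \<ge> 0 \<and> 1 \<le> (\<Sum>j\<in>UNIV. (G$i$j)^2) * Mi$i$i"
proof -
  define e :: "real^'k" where "e = axis i 1"
  define u where "u = Mi *v e"
  define a where "a = transpose G *v e"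
  define b where "b = transpose G *v u"
  have Mu: "G *v b = e"
    unfolding b_def u_def Mi_def using inv_right[OF assms(1)]
    by (simp add: matrix_vector_mul_assoc matrix_mul_assoc del: transpose_matrix_vector)
  have ui: "u$i = Mi$i$i"
    by (simp add: u_def e_def matrix_vector_mult_def axis_def if_distrib cong: if_cong)
  have bb: "b \<bullet> b = Mi$i$i"
  proof -
    have "b \<bullet> b = (u v* G) \<bullet> b" by (simp add: b_def)
    also have "\<dots> = u \<bullet> (G *v b)" by (rule dot_lmul_matrix)
    also have "\<dots> = u $ i" by (simp add: Mu e_def inner_axis)
    finally show ?thesis using ui by simp
  qed
  have ab: "a \<bullet> b = 1"
  proof -
    have "a \<bullet> b = (e v* G) \<bullet> b" by (simp add: a_def)
    also have "\<dots> = e \<bullet> (G *v b)" by (rule dot_lmul_matrix)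
    also have "\<dots> = 1" by (simp add: Mu e_def)
    finally show ?thesis .
  qed
  have aa: "a \<bullet> a = (\<Sum>j\<in>UNIV. (G$i$j)^2)"
  proof -
    have "a $ j = G$i$j" for j
      by (simp add: a_def e_def vector_matrix_mult_def axis_def if_distrib[of "\<lambda>x. x * _"] cong: if_cong)
    thus ?thesis by (simp add: inner_vec_def power2_eq_square)
  qed
  have "1 \<le> (a \<bullet> a) * (b \<bullet> b)"
  proof -
    have "1 = (a \<bullet> b)^2" using ab by simp
    also have "\<dots> \<le> (norm a * norm b)^2"
      using Cauchy_Schwarz_ineq2[of a b] by (metis abs_ge_zero power2_abs power_mono)
    also have "\<dots> = (a \<bullet> a) * (b \<bullet> b)" by (simp add: power_mult_distrib dot_square_norm)
    finally show ?thesis .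
  qed
  thus ?thesis using aa bb by (metis inner_ge_zero)
qed

theorem proposition1:
  fixes q :: "real^'k"
    and p :: "'m::finite \<Rightarrow> real^'k"
    and g g' :: "'m \<Rightarrow> real \<Rightarrow> real"
  assumes p_ne: "\<And>i. p i \<noteq> q"
    and g_deriv: "\<And>i r. r > 0 \<Longrightarrow> (g i has_real_derivative g' i r) (at r)"
    and g'_cont: "\<And>i. continuous_on {0<..} (g' i)"
    and mono: "\<And>i. antimono_on {0<..} (\<lambda>r. \<bar>g' i r\<bar>)"
    and posdef: "pos_def (\<Sum>i\<in>UNIV. outer ((p i - q) /\<^sub>R norm (p i - q)) ((p i - q) /\<^sub>R norm (p i - q)))"
    and inv: "invertible (gradH g p q ** transpose (gradH g p q))"
  shows "1 / (real CARD('m) * Lcost g p q) \<le> (MAX i\<in>UNIV. \<bar>g' i (norm (p i - q))\<bar> ^ 2)"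
proof -
  define G where "G = gradH g p q"
  define Mi where "Mi = matrix_inv (G ** transpose G)"
  define Mx where "Mx = (MAX i\<in>UNIV. \<bar>g' i (norm (p i - q))\<bar> ^ 2)"
  obtain i0 :: 'k where True by simp
  define S where "S = (\<Sum>j\<in>UNIV. (G$i0$j)^2)"
  have inv': "invertible (G ** transpose G)" using inv by (simp add: G_def)
  have diag: "\<And>i. Mi$i$i \<ge> 0 \<and> 1 \<le> (\<Sum>j\<in>UNIV. (G$i$j)^2) * Mi$i$i"
    unfolding Mi_def by (rule diag_facts[OF inv'])
  have L: "Lcost g p q = (\<Sum>i\<in>UNIV. Mi$i$i)"
    by (simp add: Lcost_def G_def Mi_def trace_def)
  have dL: "Mi$i0$i0 \<le> Lcost g p q"
    unfolding L by (rule member_le_sum) (use diag in auto)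
  have Sd: "1 \<le> S * Mi$i0$i0" using diag[of i0] by (simp add: S_def)
  have Sge: "S \<ge> 0" unfolding S_def by (simp add: sum_nonneg)
  have dpos: "Mi$i0$i0 > 0" using Sd Sge diag[of i0]
    by (metis less_eq_real_def mult_zero_right not_one_le_zero)
  have Lpos: "Lcost g p q > 0" using dL dpos by linarith
  have ent: "(G$i0$j)^2 \<le> Mx" for j
  proof -
    define r where "r = norm (p j - q)"
    have rpos: "r > 0" using p_ne[of j] by (simp add: r_def)
    have gr: "grad (\<lambda>x. g j (norm (p j - x))) q = (g' j r / r) *\<^sub>R (q - p j)"
      using grad_h[OF p_ne[of j], of "g j" "g' j r"] g_deriv[OF rpos, of j] by (simp add: r_def)
    have Gij: "G$i0$j = (g' j r / r) * (q - p j)$i0"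
      by (simp add: G_def gradH_def gr)
    have "\<bar>(q - p j)$i0\<bar> \<le> r"
      using component_le_norm_cart[of "q - p j" i0] by (simp add: r_def norm_minus_commute)
    hence "\<bar>G$i0$j\<bar> \<le> \<bar>g' j r\<bar>"
      using rpos by (simp add: Gij abs_mult divide_le_eq mult.commute mult_left_mono) (metis abs_ge_zero mult.commute mult_left_mono)
    hence "(G$i0$j)^2 \<le> \<bar>g' j r\<bar>^2"
      by (metis abs_ge_zero power2_abs power_mono)
    also have "\<dots> \<le> Mx" unfolding Mx_def r_def by (rule Max_ge) auto
    finally show ?thesis .
  qed
  have SM: "S \<le> real CARD('m) * Mx"
  proof -
    have "S \<le> (\<Sum>j\<in>(UNIV::'m set). Mx)" unfolding S_def by (rule sum_mono) (use ent in auto)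
    thus ?thesis by simp
  qed
  have "1 \<le> S * Lcost g p q" using Sd dL Sge
    by (meson mult_left_mono order_trans)
  also have "\<dots> \<le> real CARD('m) * Mx * Lcost g p q"
    using SM Lpos by (simp add: mult_right_mono)
  finally have "1 \<le> real CARD('m) * Lcost g p q * Mx" by (simp add: algebra_simps)
  hence "1 / (real CARD('m) * Lcost g p q) \<le> Mx"
    using Lpos by (simp add: divide_le_eq mult.commute)
  thus ?thesis by (simp add: Mx_def)
qed

end
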